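(* Let $\eta>0$ and $\theta>0$, and let $(\bar q(t))_{t\in\mathbb Z_+}$ be a sequence in $(0,1)$ such that $$\bar q(t+1)-\bar q(t)\le-\frac{\eta\,\bar q(t)^2}{1-\log(\theta\bar q(t))}\quad\text{for all }t,$$ and $\theta\bar q(0)\le1$. Then for every $T$ with $\eta T/\theta\ge e$, $$\bar q(T)\le\frac{1}{\eta T}\log\Big(\frac{\eta T}{\theta}\Big).$$ *)

theory Defs
  imports Complex_Main
begin

end

theory Submission
  imports Defs
begin

lemma convex_step:
  fixes a b :: real
  assumes "1 \<le> a" "a \<le> b"
  shows "b * ln b - a * ln a \<ge> (b - a) * (1 + ln a)"
proof -
  have "ln (a / b) \<le> a / b - 1" using assms by (intro ln_le_minus_one) auto
  hence "ln a - ln b \<le> a / b - 1" using assms by (simp add: ln_div)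
  hence "b * (ln a - ln b) \<le> b * (a / b - 1)" using assms by (intro mult_left_mono) auto
  hence "b * (ln a - ln b) \<le> a - b" using assms by (simp add: algebra_simps)
  thus ?thesis by (simp add: algebra_simps)
qed

theorem lemma10:
  fixes \<eta> \<theta> :: real and q :: "nat \<Rightarrow> real" and T :: nat
  assumes "\<eta> > 0" and "\<theta> > 0"
    and "\<And>t. 0 < q t \<and> q t < 1"
    and "\<And>t. q (Suc t) - q t \<le> - (\<eta> * (q t)\<^sup>2 / (1 - ln (\<theta> * q t)))"
    and "\<theta> * q 0 \<le> 1"
    and "\<eta> * real T / \<theta> \<ge> exp 1"
  shows "q T \<le> 1 / (\<eta> * real T) * ln (\<eta> * real T / \<theta>)"
proof -
  note eta = assms(1) and th = assms(2) and qb = assms(3) and rec = assms(4)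
  define p where "p t = \<theta> * q t" for t
  define c where "c = \<eta> / \<theta>"
  have cpos: "c > 0" using eta th by (simp add: c_def)
  have ppos: "p t > 0" for t using qb[of t] th by (simp add: p_def)
  have pdec: "p (Suc t) \<le> p t - c * (p t)\<^sup>2 / (1 - ln (p t))" if "p t \<le> 1" for t
  proof -
    have "q (Suc t) \<le> q t - \<eta> * (q t)\<^sup>2 / (1 - ln (p t))" using rec[of t] by (simp add: p_def)
    hence "\<theta> * q (Suc t) \<le> \<theta> * (q t - \<eta> * (q t)\<^sup>2 / (1 - ln (p t)))"
      using th by (intro mult_left_mono) auto
    moreover have "\<theta> * (q t - \<eta> * (q t)\<^sup>2 / (1 - ln (p t))) = p t - c * (p t)\<^sup>2 / (1 - ln (p t))"
      using th by (simp add: p_def c_def field_simps power2_eq_square)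
    ultimately show ?thesis by (simp add: p_def)
  qed
  have ple: "p t \<le> 1" for t
  proof (induction t)
    case 0 then show ?case using assms(5) by (simp add: p_def)
  next
    case (Suc t)
    have "ln (p t) \<le> 0" using Suc ppos[of t] by simp
    hence "c * (p t)\<^sup>2 / (1 - ln (p t)) \<ge> 0" using cpos by simp
    then show ?case using pdec[OF Suc] Suc by linarith
  qed
  define u where "u t = 1 / p t" for t
  have uge: "u t \<ge> 1" for t using ple[of t] ppos[of t] by (simp add: u_def)
  have lnu: "ln (u t) = - ln (p t)" for t using ppos[of t] by (simp add: u_def ln_div)
  have ustep: "u (Suc t) \<ge> u t + c / (1 + ln (u t))" for t
  proof -
    define D where "D = 1 - ln (p t)"
    have D1: "D \<ge> 1" using ple[of t] ppos[of t] by (simp add: D_def)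
    have h: "p t - p (Suc t) \<ge> c * (p t)\<^sup>2 / D" using pdec[OF ple[of t]] by (simp add: D_def)
    have nn: "c * (p t)\<^sup>2 / D \<ge> 0" using cpos D1 by simp
    have le: "p (Suc t) \<le> p t" using h nn by linarith
    have "u (Suc t) - u t = (p t - p (Suc t)) / (p t * p (Suc t))"
      using ppos[of t] ppos[of "Suc t"] by (simp add: u_def field_simps)
    also have "\<dots> \<ge> (p t - p (Suc t)) / (p t * p t)"
      using ppos[of t] ppos[of "Suc t"] le h nn
      by (intro divide_left_mono mult_left_mono mult_pos_pos) auto
    finally have a: "u (Suc t) - u t \<ge> (p t - p (Suc t)) / (p t * p t)" .
    have "(p t - p (Suc t)) / (p t * p t) \<ge> (c * (p t)\<^sup>2 / D) / (p t * p t)"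
      using h ppos[of t] by (intro divide_right_mono) auto
    moreover have "(c * (p t)\<^sup>2 / D) / (p t * p t) = c / D"
      using ppos[of t] by (simp add: power2_eq_square field_simps)
    moreover have "c / (1 + ln (u t)) = c / D" using lnu[of t] by (simp add: D_def)
    ultimately show ?thesis using a by linarith
  qed
  define G where "G x = x * ln x" for x :: real
  have Gstep: "G (u (Suc t)) \<ge> G (u t) + c" for t
  proof -
    have l: "1 + ln (u t) \<ge> 1" using uge[of t] by simp
    have "c / (1 + ln (u t)) \<ge> 0" using cpos l by simp
    hence ab: "u t \<le> u (Suc t)" using ustep[of t] by linarith
    have "G (u (Suc t)) - G (u t) \<ge> (u (Suc t) - u t) * (1 + ln (u t))"
      using convex_step[OF uge[of t] ab] by (simp add: G_def)
    moreover have "(u (Suc t) - u t) * (1 + ln (u t)) \<ge> (c / (1 + ln (u t))) * (1 + ln (u t))"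
      using ustep[of t] l by (intro mult_right_mono) auto
    moreover have "(c / (1 + ln (u t))) * (1 + ln (u t)) = c" using l by simp
    ultimately show ?thesis by linarith
  qed
  have Gind: "G (u t) \<ge> c * real t" for t
  proof (induction t)
    case 0 then show ?case using uge[of 0] by (simp add: G_def)
  next
    case (Suc t) then show ?case using Gstep[of t] by (simp add: algebra_simps)
  qed
  define x where "x = c * real T"
  have xe: "x \<ge> exp 1" using assms(6) by (simp add: x_def c_def)
  have xpos: "x > 0" using xe exp_gt_zero[of 1] by linarith
  have "ln (exp 1) \<le> ln x" using xe xpos by (subst ln_le_cancel_iff) auto
  hence x1: "ln x \<ge> 1" by simp
  have lnx: "ln x < x" using xpos ln_less_self by blast
  define v where "v = x / ln x"
  have v1: "v \<ge> 1" using lnx x1 by (simp add: v_def)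
  have lnv: "ln v = ln x - ln (ln x)" using xpos x1 by (simp add: v_def ln_div)
  have llx: "ln (ln x) \<ge> 0" using x1 by (subst ln_ge_zero_iff) auto
  have L0: "ln x \<noteq> 0" using x1 by simp
  have "G v = x / ln x * (ln x - ln (ln x))" unfolding G_def lnv by (simp only: v_def)
  also have "\<dots> = x / ln x * ln x - x / ln x * ln (ln x)" by (rule right_diff_distrib)
  also have "\<dots> = x - x * ln (ln x) / ln x" using L0 by simp

  also have "\<dots> \<le> x"
  proof -
    have "x * ln (ln x) \<ge> 0" using mult_nonneg_nonneg[OF less_imp_le[OF xpos] llx] .
    hence "x * ln (ln x) / ln x \<ge> 0" using x1 by (intro divide_nonneg_pos) simp_all
    thus ?thesis by linarith
  qed
  finally have Gv: "G v \<le> x" .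
  have GT: "G (u T) \<ge> x" using Gind[of T] by (simp add: x_def)
  have uv: "u T \<ge> v"
  proof (rule ccontr)
    assume "\<not> u T \<ge> v"
    hence lt: "u T < v" by simp
    have "ln (u T) \<le> ln v" using lt uge[of T] by simp
    hence "u T * ln (u T) \<le> u T * ln v" using uge[of T] by (intro mult_left_mono) auto
    also have "\<dots> < v * ln v" using lt uge[of T] v1 by (intro mult_strict_right_mono) auto
    finally have "G (u T) < G v" by (simp add: G_def)
    thus False using Gv GT by linarith
  qed
  have vpos: "v > 0" using v1 by simp
  have "p T \<le> 1 / v" using uv vpos ppos[of T] by (simp add: u_def field_simps)
  hence pT: "q T * \<theta> \<le> 1 / v" by (simp add: p_def mult.commute)
  have "q T \<le> (1 / v) / \<theta>" by (subst pos_le_divide_eq[OF th]) (rule pT)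
  also have "(1 / v) / \<theta> = 1 / (\<eta> * real T) * ln (\<eta> * real T / \<theta>)"
  proof -
    have xe: "x = \<eta> * real T / \<theta>" by (simp add: x_def c_def)
    have "(1 / v) / \<theta> = ln x / (x * \<theta>)" using L0 by (simp add: v_def)
    also have "x * \<theta> = \<eta> * real T" using th by (simp add: xe)
    finally show ?thesis by (simp add: xe)
  qed
  finally show ?thesis .
qed

end
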